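(* Consider the $(\Xi,\gamma_N,Q_N)$-Wright–Fisher graph described in the context, with type-0 frequency process $(X^N_g)_{g\in\mathbb{N}}$. For every generation $g\ge1$, every $n\le N$ and every $x$, the probability that all individuals of a sample of $n$ distinct individuals from generation $g$ are of type $0$, given $X^N_{g-1}=x$, equals $$S(x,n)=(1-\gamma_N)\,\varphi_{Q_N}(x)^n+\gamma_N\,\nu_N(x,n),\qquad \nu_N(x,n):=\mathbb{E}\Big[\big(\varphi_{Q_N}(Y(x))\big)^n\Big],$$ where $\varphi_{Q_N}$ is the probability generating function of $Q_N$ and $Y(x)=\sum_{i\ge1}B_iZ_i+x(1-|Z|)$, with $Z=(Z_1,Z_2,\dots)$ distributed according to $\Xi$ and $(B_i)_{i\ge1}$ i.i.d. Bernoulli$(x)$ independent of $Z$.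
   Context: Let $\nabla_\infty:=\{z=(z_1,z_2,\dots):z_1\ge z_2\ge\dots\ge0,\ \sum_iz_i\le1\}$ and $|z|:=\sum_iz_i$. Fix $N\in\mathbb{N}$, $\gamma_N\in[0,1]$, a probability distribution $Q_N$ on $\mathbb{N}\cup\{\infty\}$ with generating function $\varphi_{Q_N}(x)=\sum_kx^kQ_N(\{k\})$, and a probability measure $\Xi$ on $\nabla_\infty$. The $(\Xi,\gamma_N,Q_N)$-Wright–Fisher graph: generations $g\in\mathbb{Z}$ each consist of $N$ individuals labelled $1,\dots,N$, $v=(g,i)$. Let $(H_g)_{g\in\mathbb{Z}}$ be i.i.d. Bernoulli$(\gamma_N)$, $(Z_g)_{g\in\mathbb{Z}}$ i.i.d. with law $\Xi$, $Z_g=(Z_{(g,1)},Z_{(g,2)},\dots)$, and $(Y^*_{(g,m)})_{g\in\mathbb{Z},m\in\mathbb{N}}$ i.i.d. uniform on $\{1,\dots,N\}$, all independent. With $U_N$ the uniform distribution on $\{1,\dots,N\}$ set $\eta_g:=\sum_{m\ge1}Z_{(g,m)}\delta_{Y^*_{(g,m)}}+(1-|Z_g|)U_N$ and $\eta^*_g:=H_g\eta_g+(1-H_g)U_N$. Each individual $v$ of generation $g$ independently draws $K_v$ with law $Q_N$ (i.i.d., independent of $H,Z,Y^*$), and then $K_v$ labels $L_{(v,1)},\dots,L_{(v,K_v)}$ which, given $(H,Z,Y^* )$, are i.i.d. with law $\eta^*_g$, independently across individuals; the individuals $(g-1,L_{(v,j)})$ are the potential parents of $v$. Types in $\{0,1\}$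 are assigned arbitrarily at generation $0$; for $g\ge1$ an individual has type $0$ iff all its potential parents have type $0$. $X^N_g$ is the fraction of type-$0$ individuals in generation $g$. *)

theory Defs
  imports "HOL-Probability.Probability"
begin

text \<open>Ordered simplex nabla_infinity.  Sequences are indexed from 0:
  z 0 corresponds to Z_1, z 1 to Z_2, etc.\<close>
definition nabla_inf :: "(nat \<Rightarrow> real) set" where
  "nabla_inf = {z. (\<forall>i. 0 \<le> z i) \<and> (\<forall>i. z (Suc i) \<le> z i) \<and> summable z \<and> suminf z \<le> 1}"

definition znorm :: "(nat \<Rightarrow> real) \<Rightarrow> real" where
  "znorm z = suminf z"

text \<open>x^k for k in N \<union> {\<infinity>}; x^\<infinity> is the limit of x^k for x in [0,1].\<close>
definition pow_enat :: "real \<Rightarrow> enat \<Rightarrow> real" where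
  "pow_enat x k = (case k of enat m \<Rightarrow> x ^ m | \<infinity> \<Rightarrow> (if x = 1 then 1 else 0))"

definition pgf :: "enat pmf \<Rightarrow> real \<Rightarrow> real" where
  "pgf Q x = (\<integral>k. pow_enat x k \<partial>measure_pmf Q)"

text \<open>The random measure eta*_g on labels, as a function of H_g = h, Z_g = z, Y*_g = y.
  Weight of label j.  (Outside nabla_inf, which is a Xi-null set, we use U_N.)\<close>
definition eta_weight :: "nat \<Rightarrow> bool \<Rightarrow> (nat \<Rightarrow> real) \<Rightarrow> (nat \<Rightarrow> nat) \<Rightarrow> nat \<Rightarrow> real" where
  "eta_weight N h z y j =
     (if h \<and> z \<in> nabla_inf
      then (\<Sum>m. z m * (if y m = j then 1 else 0))
             + (1 - znorm z) * (if j \<in> {1..N} then 1 / real N else 0)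
      else (if j \<in> {1..N} then 1 / real N else 0))"

definition eta_star :: "nat \<Rightarrow> bool \<Rightarrow> (nat \<Rightarrow> real) \<Rightarrow> (nat \<Rightarrow> nat) \<Rightarrow> nat measure" where
  "eta_star N h z y = density (count_space UNIV) (\<lambda>j. ennreal (eta_weight N h z y j))"

text \<open>Randomness of one generation g:
  (H_g, Z_g, (Y*_(g,m))_m, (K_(g,i))_i, (L_((g,i),j))_(i,j)).
  Only individuals i in {1..N} and labels j < K_(g,i) are relevant.\<close>
type_synonym gdata = "bool \<times> (nat \<Rightarrow> real) \<times> (nat \<Rightarrow> nat) \<times> (nat \<Rightarrow> enat) \<times> (nat \<Rightarrow> nat \<Rightarrow> nat)"

definition gspace :: "gdata measure" where
  "gspace = count_space UNIV \<Otimes>\<^sub>M (\<Pi>\<^sub>M m\<in>UNIV. (borel :: real measure))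
      \<Otimes>\<^sub>M (\<Pi>\<^sub>M m\<in>UNIV. count_space UNIV) \<Otimes>\<^sub>M (\<Pi>\<^sub>M i\<in>UNIV. count_space UNIV)
      \<Otimes>\<^sub>M (\<Pi>\<^sub>M i\<in>UNIV. \<Pi>\<^sub>M j\<in>UNIV. count_space UNIV)"

definition gen_law :: "nat \<Rightarrow> real \<Rightarrow> enat pmf \<Rightarrow> (nat \<Rightarrow> real) measure \<Rightarrow> gdata measure" where
  "gen_law N \<gamma> Q \<Xi> =
     bind (measure_pmf (bernoulli_pmf \<gamma>) \<Otimes>\<^sub>M \<Xi>
             \<Otimes>\<^sub>M (\<Pi>\<^sub>M m\<in>UNIV. measure_pmf (pmf_of_set {1..N}))
             \<Otimes>\<^sub>M (\<Pi>\<^sub>M i\<in>UNIV. measure_pmf Q))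
          (\<lambda>(h, z, y, k). distr (\<Pi>\<^sub>M i\<in>UNIV. \<Pi>\<^sub>M j\<in>UNIV. eta_star N h z y) gspace
                                 (\<lambda>l. (h, z, y, k, l)))"

definition gK :: "gdata \<Rightarrow> nat \<Rightarrow> enat" where
  "gK d = fst (snd (snd (snd d)))"

definition gL :: "gdata \<Rightarrow> nat \<Rightarrow> nat \<Rightarrow> nat" where
  "gL d = snd (snd (snd (snd d)))"

text \<open>Types: True means type 0.  Generation g+1 uses the randomness of generation g+1
  (given by Gs (Suc g)); individual i of generation g+1 has type 0 iff all its
  potential parents (g, L_((g+1,i),j)), j < K_(g+1,i), have type 0.\<close>
primrec type0 :: "(nat \<Rightarrow> gdata) \<Rightarrow> (nat \<Rightarrow> bool) \<Rightarrow> nat \<Rightarrow> nat \<Rightarrow> bool" where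
  "type0 Gs init 0 i = init i"
| "type0 Gs init (Suc g) i =
     (\<forall>j. enat j < gK (Gs (Suc g)) i \<longrightarrow> type0 Gs init g (gL (Gs (Suc g)) i j))"

definition freq0 :: "nat \<Rightarrow> (nat \<Rightarrow> gdata) \<Rightarrow> (nat \<Rightarrow> bool) \<Rightarrow> nat \<Rightarrow> real" where
  "freq0 N Gs init g = real (card {i \<in> {1..N}. type0 Gs init g i}) / real N"

definition nuN :: "enat pmf \<Rightarrow> (nat \<Rightarrow> real) measure \<Rightarrow> real \<Rightarrow> nat \<Rightarrow> real" where
  "nuN Q \<Xi> x n =
     (\<integral>(z, b). (pgf Q ((\<Sum>i. (if b i then z i else 0)) + x * (1 - znorm z))) ^ n
        \<partial>(\<Xi> \<Otimes>\<^sub>M (\<Pi>\<^sub>M i\<in>UNIV. measure_pmf (bernoulli_pmf x))))"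

definition S_fun :: "real \<Rightarrow> enat pmf \<Rightarrow> (nat \<Rightarrow> real) measure \<Rightarrow> real \<Rightarrow> nat \<Rightarrow> real" where
  "S_fun \<gamma> Q \<Xi> x n = (1 - \<gamma>) * (pgf Q x) ^ n + \<gamma> * nuN Q \<Xi> x n"

end

theory Submission
  imports Defs
begin

lemma PiM_kernel:
  assumes F: "\<And>i. i \<in> I \<Longrightarrow> (\<lambda>p. F p i) \<in> measurable P (subprob_algebra (S i))"
    and Fp: "\<And>p i. p \<in> space P \<Longrightarrow> i \<in> I \<Longrightarrow> prob_space (F p i)"
  shows "(\<lambda>p. PiM I (F p)) \<in> measurable P (subprob_algebra (PiM I S))"
proof (rule measurable_subprob_algebra_generated[OF sets_PiM Int_stable_prod_algebra prod_algebra_sets_into_space])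
  have setsF: "p \<in> space P \<Longrightarrow> i \<in> I \<Longrightarrow> sets (F p i) = sets (S i)" for p i
    using measurable_space[OF F] by (auto simp: space_subprob_algebra)
  have spF: "p \<in> space P \<Longrightarrow> i \<in> I \<Longrightarrow> space (F p i) = space (S i)" for p i
    using setsF sets_eq_imp_space_eq by blast
  fix p assume p: "p \<in> space P"
  show "subprob_space (PiM I (F p))"
    using p Fp by (intro prob_space_imp_subprob_space prob_space_PiM) auto
  show "sets (PiM I (F p)) = sets (PiM I S)"
    using p setsF by (intro sets_PiM_cong) auto
next
  have setsF: "p \<in> space P \<Longrightarrow> i \<in> I \<Longrightarrow> sets (F p i) = sets (S i)" for p i
    using measurable_space[OF F] by (auto simp: space_subprob_algebra)
  have spF: "p \<in> space P \<Longrightarrow> i \<in> I \<Longrightarrow> space (F p i) = space (S i)" for p i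
    using setsF sets_eq_imp_space_eq by blast
  fix A assume "A \<in> prod_algebra I S"
  then obtain J E where A: "A = prod_emb I S J (\<Pi>\<^sub>E j\<in>J. E j)"
    "finite J" "J \<subseteq> I" "\<And>i. i \<in> J \<Longrightarrow> E i \<in> sets (S i)"
    by (rule prod_algebraE) auto
  have "(\<lambda>p. \<Prod>j\<in>J. emeasure (F p j) (E j)) \<in> borel_measurable P"
  proof (intro borel_measurable_prod_ennreal)
    fix j assume "j \<in> J"
    then show "(\<lambda>p. emeasure (F p j) (E j)) \<in> borel_measurable P"
      using A F[of j] by (intro measurable_compose[OF _ measurable_emeasure_subprob_algebra]) auto
  qed
  moreover have "emeasure (PiM I (F p)) A = (\<Prod>j\<in>J. emeasure (F p j) (E j))" if p: "p \<in> space P" for p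
  proof -
    have "A = prod_emb I (F p) J (\<Pi>\<^sub>E j\<in>J. E j)"
      unfolding A(1) prod_emb_def using spF[OF p] by (auto simp: PiE_iff)
    then show ?thesis
      using p A setsF Fp by (simp add: emeasure_PiM_emb subsetD)
  qed
  ultimately show "(\<lambda>a. emeasure (Pi\<^sub>M I (F a)) A) \<in> borel_measurable P"
    by (subst measurable_cong[where g="\<lambda>p. \<Prod>j\<in>J. emeasure (F p j) (E j)"]) auto
next
  have setsF: "p \<in> space P \<Longrightarrow> i \<in> I \<Longrightarrow> sets (F p i) = sets (S i)" for p i
    using measurable_space[OF F] by (auto simp: space_subprob_algebra)
  have "emeasure (PiM I (F p)) (\<Pi>\<^sub>E i\<in>I. space (S i)) = 1" if p: "p \<in> space P" for p
  proof -
    interpret prob_space "PiM I (F p)" using p Fp by (intro prob_space_PiM) auto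
    have "space (PiM I (F p)) = (\<Pi>\<^sub>E i\<in>I. space (S i))"
      unfolding space_PiM by (intro PiE_cong sets_eq_imp_space_eq setsF[OF p])
    then show ?thesis using emeasure_space_1 by simp
  qed
  then show "(\<lambda>a. emeasure (Pi\<^sub>M I (F a)) (\<Pi>\<^sub>E i\<in>I. space (S i))) \<in> borel_measurable P"
    by (subst measurable_cong[where g="\<lambda>p. 1"]) auto
qed

lemma nabla_summable: "z \<in> nabla_inf \<Longrightarrow> summable z" and nabla_nonneg: "z \<in> nabla_inf \<Longrightarrow> 0 \<le> z i"
  and nabla_le1: "z \<in> nabla_inf \<Longrightarrow> znorm z \<le> 1"
  by (auto simp: nabla_inf_def znorm_def)

lemma summable_part:
  assumes "z \<in> nabla_inf" and that: "\<And>m. 0 \<le> f m" "\<And>m. f m \<le> (1::real)" shows "summable (\<lambda>m. z m * f m)"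
proof (rule summable_comparison_test'[OF nabla_summable[OF assms(1)]])
  fix m show "norm (z m * f m) \<le> z m"
    using nabla_nonneg[OF assms(1), of m] that[of m] by (simp add: abs_mult mult_left_le)
qed

lemma eta_emeasure_nabla:
  assumes N: "N \<ge> 1" and z: "z \<in> nabla_inf"
  shows "emeasure (eta_star N True z y) T =
     ennreal (\<Sum>m. z m * indicator T (y m)) + ennreal ((1 - znorm z) * real (card (T \<inter> {1..N})) / real N)"
proof -
  let ?D = "\<lambda>j. \<Sum>m. z m * (if y m = j then 1 else 0)"
  let ?U = "\<lambda>j. (1 - znorm z) * (if j \<in> {1..N} then 1 / real N else 0)"
  have Dnn: "0 \<le> ?D j" for j
    using summable_part[OF z, of "\<lambda>m. if y m = j then 1 else 0"] nabla_nonneg[OF z]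
    by (intro suminf_nonneg) auto
  have Unn: "0 \<le> ?U j" for j using nabla_le1[OF z] by auto
  have "emeasure (eta_star N True z y) T = (\<integral>\<^sup>+j. ennreal (?D j + ?U j) * indicator T j \<partial>count_space UNIV)"
    unfolding eta_star_def eta_weight_def using z by (simp add: emeasure_density)
  also have "\<dots> = (\<integral>\<^sup>+j. ennreal (?D j) * indicator T j \<partial>count_space UNIV) + (\<integral>\<^sup>+j. ennreal (?U j) * indicator T j \<partial>count_space UNIV)"
    using Dnn Unn by (subst nn_integral_add[symmetric]) (auto simp: ennreal_plus distrib_right intro!: nn_integral_cong)
  also have "(\<integral>\<^sup>+j. ennreal (?D j) * indicator T j \<partial>count_space UNIV) = ennreal (\<Sum>m. z m * indicator T (y m))"
  proof -
    have e1: "ennreal (?D j) = (\<integral>\<^sup>+m. ennreal (z m * (if y m = j then 1 else 0)) \<partial>count_space UNIV)" for j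
      using summable_part[OF z, of "\<lambda>m. if y m = j then 1 else 0"] nabla_nonneg[OF z]
      by (subst nn_integral_count_space_nat) (simp add: suminf_ennreal2)
    have "(\<integral>\<^sup>+j. ennreal (?D j) * indicator T j \<partial>count_space UNIV)
        = (\<integral>\<^sup>+j. (\<integral>\<^sup>+m. ennreal (z m * (if y m = j then 1 else 0)) * indicator T j \<partial>count_space UNIV) \<partial>count_space UNIV)"
      unfolding e1 by (simp add: nn_integral_multc)
    also have "\<dots> = (\<integral>\<^sup>+m. (\<integral>\<^sup>+j. ennreal (z m * (if y m = j then 1 else 0)) * indicator T j \<partial>count_space UNIV) \<partial>count_space UNIV)"
      by (intro pair_sigma_finite.Fubini' pair_sigma_finite.intro sigma_finite_measure_count_space_countable)
         (auto simp: pair_measure_countable)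
    also have "\<dots> = (\<integral>\<^sup>+m. ennreal (z m * indicator T (y m)) \<partial>count_space UNIV)"
    proof (intro nn_integral_cong)
      fix m :: nat
      have "(\<integral>\<^sup>+j. ennreal (z m * (if y m = j then 1 else 0)) * indicator T j \<partial>count_space UNIV)
          = (\<integral>\<^sup>+j. ennreal (z m * indicator T (y m)) * indicator {y m} j \<partial>count_space UNIV)"
        by (intro nn_integral_cong) (auto simp: indicator_def)
      also have "\<dots> = ennreal (z m * indicator T (y m))"
        by (subst nn_integral_cmult_indicator) auto
      finally show "(\<integral>\<^sup>+j. ennreal (z m * (if y m = j then 1 else 0)) * indicator T j \<partial>count_space UNIV) = ennreal (z m * indicator T (y m))" .
    qed
    also have "\<dots> = ennreal (\<Sum>m. z m * indicator T (y m))"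
      using summable_part[OF z, of "\<lambda>m. indicator T (y m)"] nabla_nonneg[OF z]
      by (subst nn_integral_count_space_nat) (simp add: suminf_ennreal2)
    finally show ?thesis .
  qed
  also have "(\<integral>\<^sup>+j. ennreal (?U j) * indicator T j \<partial>count_space UNIV) = ennreal ((1 - znorm z) * real (card (T \<inter> {1..N})) / real N)"
  proof -
    have "(\<integral>\<^sup>+j. ennreal (?U j) * indicator T j \<partial>count_space UNIV)
       = (\<integral>\<^sup>+j. ennreal ((1 - znorm z) / real N) * indicator (T \<inter> {1..N}) j \<partial>count_space UNIV)"
      by (intro nn_integral_cong) (auto simp: indicator_def)
    also have "\<dots> = ennreal ((1 - znorm z) / real N) * of_nat (card (T \<inter> {1..N}))"
      by (subst nn_integral_cmult_indicator) auto
    also have "\<dots> = ennreal ((1 - znorm z) * real (card (T \<inter> {1..N})) / real N)"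
      using nabla_le1[OF z] by (simp add: ennreal_of_nat_eq_real_of_nat ennreal_mult[symmetric])
    finally show ?thesis .
  qed
  finally show ?thesis .
qed

lemma eta_emeasure_unif:
  assumes "\<not> (h \<and> z \<in> nabla_inf)"
  shows "emeasure (eta_star N h z y) T = ennreal (real (card (T \<inter> {1..N})) / real N)"
proof -
  have "emeasure (eta_star N h z y) T = (\<integral>\<^sup>+j. ennreal (if j \<in> {1..N} then 1 / real N else 0) * indicator T j \<partial>count_space UNIV)"
    unfolding eta_star_def eta_weight_def using assms by (auto simp: emeasure_density intro!: nn_integral_cong)
  also have "\<dots> = (\<integral>\<^sup>+j. ennreal (1 / real N) * indicator (T \<inter> {1..N}) j \<partial>count_space UNIV)"
    by (intro nn_integral_cong) (auto simp: indicator_def)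
  also have "\<dots> = ennreal (1 / real N) * of_nat (card (T \<inter> {1..N}))"
    by (subst nn_integral_cmult_indicator) auto
  also have "\<dots> = ennreal (real (card (T \<inter> {1..N})) / real N)"
    by (simp add: ennreal_of_nat_eq_real_of_nat ennreal_mult[symmetric])
  finally show ?thesis .
qed

lemma sets_eta_star[simp]: "sets (eta_star N h z y) = UNIV"
  by (simp add: eta_star_def)

lemma prob_eta_star:
  assumes N: "N \<ge> 1" shows "prob_space (eta_star N h z y)"
proof
  have sp: "space (eta_star N h z y) = UNIV" by (simp add: eta_star_def)
  show "emeasure (eta_star N h z y) (space (eta_star N h z y)) = 1"
  proof (cases "h \<and> z \<in> nabla_inf")
    case True
    then have "h" "z \<in> nabla_inf" by auto
    moreover have "0 \<le> suminf z" using nabla_summable[OF True[THEN conjunct2]] nabla_nonneg[OF True[THEN conjunct2]]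
      by (intro suminf_nonneg) auto
    moreover have "suminf z \<le> 1" using nabla_le1[OF True[THEN conjunct2]] by (simp add: znorm_def)
    ultimately show ?thesis
      using N unfolding sp by (simp add: eta_emeasure_nabla znorm_def ennreal_plus[symmetric] del: ennreal_plus)
  next
    case False
    then show ?thesis using N unfolding sp by (simp add: eta_emeasure_unif)
  qed
qed


abbreviation "ZS \<equiv> (\<Pi>\<^sub>M m\<in>(UNIV::nat set). (borel :: real measure))"
abbreviation "YS \<equiv> (\<Pi>\<^sub>M m\<in>(UNIV::nat set). count_space (UNIV::nat set))"
abbreviation "KS \<equiv> (\<Pi>\<^sub>M m\<in>(UNIV::nat set). count_space (UNIV::enat set))"
abbreviation "LS \<equiv> (\<Pi>\<^sub>M i\<in>(UNIV::nat set). \<Pi>\<^sub>M j\<in>(UNIV::nat set). count_space (UNIV::nat set))"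
abbreviation "PS \<equiv> count_space (UNIV::bool set) \<Otimes>\<^sub>M ZS \<Otimes>\<^sub>M YS \<Otimes>\<^sub>M KS"

lemma comp_ZS[measurable]: "(\<lambda>z. z i) \<in> borel_measurable ZS"
  by (rule measurable_component_singleton) simp
lemma comp_YS[measurable]: "(\<lambda>z. z i) \<in> measurable YS (count_space UNIV)"
  by (rule measurable_component_singleton) simp

lemma nabla_inf_pred[measurable]: "Measurable.pred ZS (\<lambda>z. z \<in> nabla_inf)"
proof -
  have *: "(z \<in> nabla_inf) = ((\<forall>i. 0 \<le> z i) \<and> (\<forall>i. z (Suc i) \<le> z i) \<and> Cauchy (\<lambda>n. \<Sum>i<n. z i) \<and> suminf z \<le> 1)" for z
    by (simp add: nabla_inf_def summable_iff_convergent Cauchy_convergent_iff)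
  have c[measurable]: "Measurable.pred ZS (\<lambda>z. Cauchy (\<lambda>n. \<Sum>i<n. z i))"
    unfolding pred_def using sets_Collect_Cauchy[of "\<lambda>n z. \<Sum>i<n. z i"] by measurable
  have [measurable]: "Measurable.pred ZS (\<lambda>z. z (Suc i) \<le> z i)" for i
    unfolding pred_def by (rule borel_measurable_le) measurable
  show ?thesis unfolding * by measurable
qed

definition etaP :: "nat \<Rightarrow> bool \<times> (nat \<Rightarrow> real) \<times> (nat \<Rightarrow> nat) \<times> (nat \<Rightarrow> enat) \<Rightarrow> nat measure" where
  "etaP N p = eta_star N (fst p) (fst (snd p)) (fst (snd (snd p)))"

lemma etaP_emeasure:
  assumes N: "N \<ge> 1"
  shows "emeasure (etaP N p) T = ennreal (if fst p \<and> fst (snd p) \<in> nabla_inf then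
      (\<Sum>m. fst (snd p) m * indicator T (fst (snd (snd p)) m)) + (1 - suminf (fst (snd p))) * real (card (T \<inter> {1..N})) / real N
     else real (card (T \<inter> {1..N})) / real N)"
proof -
  obtain h z y k where p: "p = (h, z, y, k)" by (cases p) auto
  show ?thesis
  proof (cases "h \<and> z \<in> nabla_inf")
    case True
    then have z: "z \<in> nabla_inf" and h: h by auto
    have a: "0 \<le> (\<Sum>m. z m * indicator T (y m))"
      using summable_part[OF z, of "\<lambda>m. indicator T (y m)"] nabla_nonneg[OF z]
      by (intro suminf_nonneg) auto
    have b: "0 \<le> (1 - znorm z) * real (card (T \<inter> {1..N})) / real N"
      using nabla_le1[OF z] by auto
    show ?thesis using True a b unfolding p etaP_def
      by (simp add: eta_emeasure_nabla[OF N z] ennreal_plus[symmetric] znorm_def del: ennreal_plus)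
  next
    case False
    then show ?thesis unfolding p etaP_def by (auto simp: eta_emeasure_unif)
  qed
qed

lemma etaP_kernel:
  assumes N: "N \<ge> 1"
  shows "etaP N \<in> measurable PS (subprob_algebra (count_space UNIV))"
proof (rule measurable_subprob_algebra)
  fix p show "subprob_space (etaP N p)"
    unfolding etaP_def by (intro prob_space_imp_subprob_space prob_eta_star N)
  show "sets (etaP N p) = sets (count_space UNIV)" by (simp add: etaP_def)
next
  fix T :: "nat set"
  show "(\<lambda>p. emeasure (etaP N p) T) \<in> borel_measurable PS"
    unfolding etaP_emeasure[OF N] by measurable
qed

lemma LS_kernel:
  assumes N: "N \<ge> 1"
  shows "(\<lambda>p. PiM UNIV (\<lambda>i. PiM UNIV (\<lambda>j. etaP N p))) \<in> measurable PS (subprob_algebra LS)"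
proof (rule PiM_kernel)
  fix i :: nat
  show "(\<lambda>p. PiM UNIV (\<lambda>j. etaP N p)) \<in> measurable PS (subprob_algebra (PiM UNIV (\<lambda>j. count_space UNIV)))"
    by (rule PiM_kernel[OF etaP_kernel[OF N]]) (simp add: etaP_def prob_eta_star[OF N])
  fix p show "prob_space (PiM UNIV (\<lambda>j. etaP N p))"
    by (intro prob_space_PiM) (simp add: etaP_def prob_eta_star[OF N])
qed





definition LK :: "nat \<Rightarrow> bool \<times> (nat \<Rightarrow> real) \<times> (nat \<Rightarrow> nat) \<times> (nat \<Rightarrow> enat) \<Rightarrow> (nat \<Rightarrow> nat \<Rightarrow> nat) measure" where
  "LK N p = PiM UNIV (\<lambda>i. PiM UNIV (\<lambda>j. etaP N p))"

definition PM :: "nat \<Rightarrow> real \<Rightarrow> enat pmf \<Rightarrow> (nat \<Rightarrow> real) measure \<Rightarrow> (bool \<times> (nat \<Rightarrow> real) \<times> (nat \<Rightarrow> nat) \<times> (nat \<Rightarrow> enat)) measure" where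
  "PM N \<gamma> Q \<Xi> = measure_pmf (bernoulli_pmf \<gamma>) \<Otimes>\<^sub>M \<Xi>
             \<Otimes>\<^sub>M (\<Pi>\<^sub>M m\<in>UNIV. measure_pmf (pmf_of_set {1..N}))
             \<Otimes>\<^sub>M (\<Pi>\<^sub>M i\<in>UNIV. measure_pmf Q)"

lemma sets_PM: "sets \<Xi> = sets ZS \<Longrightarrow> sets (PM N \<gamma> Q \<Xi>) = sets PS"
  unfolding PM_def by (intro sets_pair_measure_cong sets_PiM_cong) simp_all

lemma space_PM: "sets \<Xi> = sets ZS \<Longrightarrow> space (PM N \<gamma> Q \<Xi>) = UNIV"
  using sets_PM[THEN sets_eq_imp_space_eq] by (simp add: space_pair_measure space_PiM)

lemma space_gspace: "space gspace = UNIV"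
  by (simp add: gspace_def space_pair_measure space_PiM)

lemma LK_kernel:
  assumes "N \<ge> 1" "sets \<Xi> = sets ZS"
  shows "LK N \<in> measurable (PM N \<gamma> Q \<Xi>) (subprob_algebra LS)"
  unfolding LK_def using LS_kernel[OF assms(1)] measurable_cong_sets[OF sets_PM[OF assms(2)] refl] by blast

lemma gen_law_emeasure:
  assumes N: "N \<ge> 1" and Xs: "sets \<Xi> = sets ZS" and B: "B \<in> sets gspace"
  shows "emeasure (gen_law N \<gamma> Q \<Xi>) B = (\<integral>\<^sup>+p. emeasure (LK N p)
      {l. (fst p, fst (snd p), fst (snd (snd p)), snd (snd (snd p)), l) \<in> B} \<partial>PM N \<gamma> Q \<Xi>)"
proof -
  define F where "F = (\<lambda>(p::bool \<times> (nat \<Rightarrow> real) \<times> (nat \<Rightarrow> nat) \<times> (nat \<Rightarrow> enat)) (l::nat \<Rightarrow> nat \<Rightarrow> nat).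
     (fst p, fst (snd p), fst (snd (snd p)), snd (snd (snd p)), l))"
  have K: "(\<lambda>(h, z, y, k). distr (\<Pi>\<^sub>M i\<in>UNIV. \<Pi>\<^sub>M j\<in>UNIV. eta_star N h z y) gspace (\<lambda>l. (h, z, y, k, l)))
       = (\<lambda>p. distr (LK N p) gspace (F p))"
    by (auto simp: fun_eq_iff LK_def etaP_def F_def split: prod.split)
  have Fm: "case_prod F \<in> measurable (PM N \<gamma> Q \<Xi> \<Otimes>\<^sub>M LS) gspace"
  proof -
    have "case_prod F \<in> measurable (PS \<Otimes>\<^sub>M LS) gspace"
      unfolding F_def gspace_def by measurable
    then show ?thesis
      using measurable_cong_sets[OF sets_pair_measure_cong[OF sets_PM[OF Xs] refl] refl] by blast
  qed
  have Km: "(\<lambda>p. distr (LK N p) gspace (F p)) \<in> measurable (PM N \<gamma> Q \<Xi>) (subprob_algebra gspace)"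
    by (rule measurable_distr2[OF Fm LK_kernel[OF N Xs]])
  have ne: "space (PM N \<gamma> Q \<Xi>) \<noteq> {}" using space_PM[OF Xs] by simp
  have "emeasure (gen_law N \<gamma> Q \<Xi>) B = (\<integral>\<^sup>+p. emeasure (distr (LK N p) gspace (F p)) B \<partial>PM N \<gamma> Q \<Xi>)"
    unfolding gen_law_def K PM_def[symmetric] by (rule emeasure_bind[OF ne Km B])
  also have "\<dots> = (\<integral>\<^sup>+p. emeasure (LK N p) {l. (fst p, fst (snd p), fst (snd (snd p)), snd (snd (snd p)), l) \<in> B} \<partial>PM N \<gamma> Q \<Xi>)"
  proof (intro nn_integral_cong)
    fix p
    have Fp: "F p \<in> measurable (LK N p) gspace"
    proof -
      have "F p \<in> measurable LS gspace" unfolding F_def gspace_def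
        by (intro measurable_Pair measurable_const measurable_ident_sets) (auto simp: space_PiM)
      moreover have "sets (LK N p) = sets LS" unfolding LK_def by (intro sets_PiM_cong) (auto simp: etaP_def)
      ultimately show ?thesis using measurable_cong_sets by blast
    qed
    have sp: "space (LK N p) = UNIV" unfolding LK_def by (simp add: space_PiM etaP_def eta_star_def)
    show "emeasure (distr (LK N p) gspace (F p)) B = emeasure (LK N p) {l. (fst p, fst (snd p), fst (snd (snd p)), snd (snd (snd p)), l) \<in> B}"
      using B by (subst emeasure_distr[OF Fp B]) (simp add: sp F_def vimage_def)
  qed
  finally show ?thesis .
qed





lemma inner_label:
  assumes E: "prob_space E" and sE: "sets E = UNIV" and spE: "space E = (UNIV::nat set)"
  shows "emeasure (PiM (UNIV::nat set) (\<lambda>j. E)) {m. \<forall>j. enat j < \<kappa> \<longrightarrow> t (m j)} = ennreal (pow_enat (measure E {j. t j}) \<kappa>)"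
proof -
  interpret E: prob_space E by fact
  define q where "q = measure E {j. t j}"
  have q01: "0 \<le> q" "q \<le> 1" unfolding q_def by auto
  have Eq: "emeasure E {j. t j} = ennreal q" unfolding q_def using sE by (simp add: E.emeasure_eq_measure)
  have sp: "space (PiM (UNIV::nat set) (\<lambda>j. E)) = UNIV" by (simp add: space_PiM spE)
  have S: "{m. \<forall>j<n. t (m j)} = prod_emb UNIV (\<lambda>_. E) {..<n} (Pi\<^sub>E {..<n} (\<lambda>_. {j. t j}))" for n
    by (auto simp: prod_emb_def spE PiE_iff)
  have Sm: "emeasure (PiM (UNIV::nat set) (\<lambda>j. E)) {m. \<forall>j<n. t (m j)} = ennreal (q ^ n)" for n
    unfolding S using E sE q01 by (subst emeasure_PiM_emb) (auto simp: Eq ennreal_power)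
  show ?thesis
  proof (cases \<kappa>)
    case (enat n)
    then show ?thesis using Sm[of n] by (simp add: pow_enat_def q_def)
  next
    case infinity
    have eqI: "{m. \<forall>j. enat j < \<kappa> \<longrightarrow> t (m j)} = (\<Inter>n. {m. \<forall>j<n. t (m j)})"
      using infinity by auto
    have "(\<lambda>n. emeasure (PiM (UNIV::nat set) (\<lambda>j. E)) {m. \<forall>j<n. t (m j)}) \<longlonglongrightarrow> emeasure (PiM (UNIV::nat set) (\<lambda>j. E)) (\<Inter>n. {m. \<forall>j<n. t (m j)})"
    proof (rule Lim_emeasure_decseq)
      show "range (\<lambda>n. {m. \<forall>j<n. t (m j)}) \<subseteq> sets (PiM (UNIV::nat set) (\<lambda>j. E))"
        unfolding S using sE by (auto intro!: sets_PiM_I)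
      show "decseq (\<lambda>n. {m. \<forall>j<n. t (m j)})" by (auto simp: decseq_def)
      show "emeasure (PiM (UNIV::nat set) (\<lambda>j. E)) {m. \<forall>j<n. t (m j)} \<noteq> \<infinity>" for n using Sm[of n] by simp
    qed
    then have L1: "(\<lambda>n. ennreal (q ^ n)) \<longlonglongrightarrow> emeasure (PiM (UNIV::nat set) (\<lambda>j. E)) {m. \<forall>j. enat j < \<kappa> \<longrightarrow> t (m j)}"
      unfolding Sm eqI .
    have L2: "(\<lambda>n. ennreal (q ^ n)) \<longlonglongrightarrow> ennreal (if q = 1 then 1 else 0)"
    proof (cases "q = 1")
      case True then show ?thesis by simp
    next
      case False
      then have "q < 1" using q01 by simp
      then have "(\<lambda>n. q ^ n) \<longlonglongrightarrow> 0" using q01 by (intro LIMSEQ_power_zero) simp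
      then show ?thesis using False by (intro tendsto_ennrealI) simp
    qed
    show ?thesis using LIMSEQ_unique[OF L1 L2] infinity by (simp add: pow_enat_def q_def)
  qed
qed

lemma outer_label:
  assumes E: "prob_space E" and sE: "sets E = UNIV" and spE: "space E = (UNIV::nat set)" and A: "finite A"
  shows "emeasure (PiM (UNIV::nat set) (\<lambda>i. PiM (UNIV::nat set) (\<lambda>j. E))) {l. \<forall>i\<in>A. \<forall>j. enat j < k i \<longrightarrow> t (l i j)}
     = (\<Prod>i\<in>A. ennreal (pow_enat (measure E {j. t j}) (k i)))"
proof -
  let ?I = "PiM (UNIV::nat set) (\<lambda>j. E)"
  have spI: "space ?I = UNIV" by (simp add: space_PiM spE)
  have setI: "{m. \<forall>j. enat j < k i \<longrightarrow> t (m j)} \<in> sets ?I" for i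
  proof -
    have cE: "(\<lambda>m. m j) \<in> measurable ?I (count_space UNIV)" for j
    proof -
      have "(\<lambda>m. m j) \<in> measurable ?I E" by (rule measurable_component_singleton) simp
      moreover have "measurable ?I E = measurable ?I (count_space UNIV)" by (rule measurable_cong_sets) (simp_all add: sE)
      ultimately show ?thesis by simp
    qed
    have [measurable]: "Measurable.pred ?I (\<lambda>m. t (m j))" for j
      by (rule measurable_compose[OF cE]) simp
    have "Measurable.pred ?I (\<lambda>m. \<forall>j. enat j < k i \<longrightarrow> t (m j))" by measurable
    then show ?thesis using spI by (simp add: pred_def)
  qed
  have "{l. \<forall>i\<in>A. \<forall>j. enat j < k i \<longrightarrow> t (l i j)} = prod_emb UNIV (\<lambda>i. ?I) A (Pi\<^sub>E A (\<lambda>i. {m. \<forall>j. enat j < k i \<longrightarrow> t (m j)}))"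
    by (auto simp: prod_emb_def spI PiE_iff)
  also have "emeasure (PiM UNIV (\<lambda>i. ?I)) \<dots> = (\<Prod>i\<in>A. emeasure ?I {m. \<forall>j. enat j < k i \<longrightarrow> t (m j)})"
    using A setI E by (intro emeasure_PiM_emb prob_space_PiM) auto
  also have "\<dots> = (\<Prod>i\<in>A. ennreal (pow_enat (measure E {j. t j}) (k i)))"
    using inner_label[OF E sE spE] by simp
  finally show ?thesis .
qed





lemma pow_enat_meas[measurable]: "(\<lambda>x. pow_enat x \<kappa>) \<in> borel_measurable borel"
proof (cases \<kappa>)
  case (enat m)
  have "(\<lambda>x::real. x ^ m) \<in> borel_measurable borel" by measurable
  then show ?thesis using enat by (simp add: pow_enat_def)
next
  case infinity
  have "(\<lambda>x::real. if x = 1 then 1 else (0::real)) \<in> borel_measurable borel" by measurable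
  then show ?thesis using infinity by (simp add: pow_enat_def)
qed

lemma pow_enat_bounds':
  assumes "0 \<le> x" "x \<le> 1" shows "0 \<le> pow_enat x \<kappa> \<and> pow_enat x \<kappa> \<le> 1"
  using assms by (cases \<kappa>) (auto simp: pow_enat_def power_le_one)

lemma pow_enat_bounds:
  assumes "0 \<le> x" "x \<le> 1" shows "0 \<le> pow_enat x \<kappa>" "pow_enat x \<kappa> \<le> 1"
  using pow_enat_bounds'[OF assms] by auto

lemma pow_enat_comp:
  assumes f: "f \<in> borel_measurable M" and g: "g \<in> measurable M (count_space UNIV)"
  shows "(\<lambda>w. pow_enat (f w) (g w)) \<in> borel_measurable M"
proof -
  have "(\<lambda>w. pow_enat (f w) k) \<in> borel_measurable M" for k
    using measurable_compose[OF f pow_enat_meas] by simp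
  then show ?thesis
    by (rule measurable_compose_countable'[where f="\<lambda>k w. pow_enat (f w) k" and g=g, OF _ g]) auto
qed

lemma pgf_integrable:
  assumes "0 \<le> q" "q \<le> 1" shows "integrable (measure_pmf Q) (\<lambda>k. pow_enat q k)"
  using pow_enat_bounds[OF assms]
  by (intro measure_pmf.integrable_const_bound[where B=1]) auto

lemma pgf_bounds:
  assumes "0 \<le> q" "q \<le> 1" shows "0 \<le> pgf Q q" "pgf Q q \<le> 1"
proof -
  show "0 \<le> pgf Q q" unfolding pgf_def using pow_enat_bounds[OF assms] by (intro integral_nonneg_AE) auto
  have "pgf Q q \<le> (\<integral>k. 1 \<partial>measure_pmf Q)" unfolding pgf_def
    using pow_enat_bounds[OF assms] pgf_integrable[OF assms] by (intro integral_mono) auto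
  then show "pgf Q q \<le> 1" by simp
qed

lemma pgf_nn:
  assumes "0 \<le> q" "q \<le> 1" shows "(\<integral>\<^sup>+k. ennreal (pow_enat q k) \<partial>measure_pmf Q) = ennreal (pgf Q q)"
  unfolding pgf_def using pgf_integrable[OF assms] pow_enat_bounds[OF assms]
  by (intro nn_integral_eq_integral) auto

lemma pgf_meas[measurable]: "pgf Q \<in> borel_measurable borel"
proof -
  have sf: "sigma_finite_measure (measure_pmf Q)" by (rule prob_space_imp_sigma_finite) (rule measure_pmf.prob_space_axioms)
  have "(\<lambda>x. \<integral>k. pow_enat x k \<partial>measure_pmf Q) \<in> borel_measurable borel"
  proof (rule sigma_finite_measure.borel_measurable_lebesgue_integral[OF sf])
    have "(\<lambda>w. pow_enat (fst w) (snd w)) \<in> borel_measurable (borel \<Otimes>\<^sub>M measure_pmf Q)"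
    proof (rule pow_enat_comp)
      show "fst \<in> borel_measurable (borel \<Otimes>\<^sub>M measure_pmf Q)" by (rule measurable_fst'') simp
      have "snd \<in> measurable (borel \<Otimes>\<^sub>M measure_pmf Q) (measure_pmf Q)" by (rule measurable_snd)
      moreover have "measurable (borel \<Otimes>\<^sub>M measure_pmf Q) (measure_pmf Q) = measurable (borel \<Otimes>\<^sub>M measure_pmf Q) (count_space UNIV)"
        by (rule measurable_cong_sets) simp_all
      ultimately show "snd \<in> measurable (borel \<Otimes>\<^sub>M measure_pmf Q) (count_space UNIV)" by simp
    qed
    then show "(\<lambda>(x, y). pow_enat x y) \<in> borel_measurable (borel \<Otimes>\<^sub>M measure_pmf Q)"
      by (simp add: case_prod_beta)
  qed
  then show ?thesis unfolding pgf_def[abs_def] .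
qed


lemma meas_pmf_any: "f \<in> measurable (measure_pmf p) (count_space UNIV)"
  by (subst measurable_cong_sets[OF sets_measure_pmf_count_space refl]) simp

lemma meas_PiM_pmf_comp: "(\<lambda>\<omega>. f (\<omega> i)) \<in> measurable (PiM (UNIV::nat set) (\<lambda>_. measure_pmf p)) (count_space UNIV)"
proof (rule measurable_compose[of _ _ "measure_pmf p"])
  show "(\<lambda>\<omega>. \<omega> i) \<in> measurable (PiM (UNIV::nat set) (\<lambda>_. measure_pmf p)) (measure_pmf p)"
    by (rule measurable_component_singleton) simp
qed (rule meas_pmf_any)

lemma distr_PiM_map:
  fixes p :: "'a pmf" and f :: "'a \<Rightarrow> 'b"
  shows "distr (PiM (UNIV::nat set) (\<lambda>_. measure_pmf p)) (PiM UNIV (\<lambda>_. measure_pmf (map_pmf f p))) (\<lambda>\<omega> i. f (\<omega> i))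
     = PiM UNIV (\<lambda>_. measure_pmf (map_pmf f p))"
proof (rule measure_eqI_PiM_infinite)
  show "sets (distr (PiM (UNIV::nat set) (\<lambda>_. measure_pmf p)) (PiM UNIV (\<lambda>_. measure_pmf (map_pmf f p))) (\<lambda>\<omega> i. f (\<omega> i)))
    = sets (PiM UNIV (\<lambda>_. measure_pmf (map_pmf f p)))" by simp
  show "sets (PiM UNIV (\<lambda>_. measure_pmf (map_pmf f p))) = sets (PiM UNIV (\<lambda>_. measure_pmf (map_pmf f p)))" ..
  show "finite_measure (distr (PiM (UNIV::nat set) (\<lambda>_. measure_pmf p)) (PiM UNIV (\<lambda>_. measure_pmf (map_pmf f p))) (\<lambda>\<omega> i. f (\<omega> i)))"
    by (intro prob_space.finite_measure prob_space.prob_space_distr prob_space_PiM measure_pmf.prob_space_axioms)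
       (rule measurable_PiM_single', auto intro: meas_PiM_pmf_comp)
  fix A J assume J: "finite J" "J \<subseteq> (UNIV::nat set)" and A: "\<And>i. i \<in> J \<Longrightarrow> A i \<in> sets (measure_pmf (map_pmf f p))"
  have m: "(\<lambda>\<omega> i. f (\<omega> i)) \<in> measurable (PiM (UNIV::nat set) (\<lambda>_. measure_pmf p)) (PiM UNIV (\<lambda>_. measure_pmf (map_pmf f p)))"
    by (rule measurable_PiM_single') (auto intro: meas_PiM_pmf_comp)
  have pre: "(\<lambda>\<omega> i. f (\<omega> i)) -` prod_emb UNIV (\<lambda>_. measure_pmf (map_pmf f p)) J (Pi\<^sub>E J A) \<inter> space (PiM (UNIV::nat set) (\<lambda>_. measure_pmf p))
     = prod_emb UNIV (\<lambda>_. measure_pmf p) J (Pi\<^sub>E J (\<lambda>i. f -` A i))"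
    by (auto simp: prod_emb_def space_PiM PiE_iff)
  have "emeasure (distr (PiM (UNIV::nat set) (\<lambda>_. measure_pmf p)) (PiM UNIV (\<lambda>_. measure_pmf (map_pmf f p))) (\<lambda>\<omega> i. f (\<omega> i)))
      (prod_emb UNIV (\<lambda>_. measure_pmf (map_pmf f p)) J (Pi\<^sub>E J A))
    = emeasure (PiM (UNIV::nat set) (\<lambda>_. measure_pmf p)) (prod_emb UNIV (\<lambda>_. measure_pmf p) J (Pi\<^sub>E J (\<lambda>i. f -` A i)))"
    using J A by (subst emeasure_distr[OF m]) (auto simp: pre intro!: sets_PiM_I)
  also have "\<dots> = (\<Prod>i\<in>J. emeasure (measure_pmf p) (f -` A i))"
    using J by (intro emeasure_PiM_emb measure_pmf.prob_space_axioms) auto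
  also have "\<dots> = (\<Prod>i\<in>J. emeasure (measure_pmf (map_pmf f p)) (A i))"
    by (simp add: emeasure_map_pmf)
  also have "\<dots> = emeasure (PiM UNIV (\<lambda>_. measure_pmf (map_pmf f p))) (prod_emb UNIV (\<lambda>_. measure_pmf (map_pmf f p)) J (Pi\<^sub>E J A))"
    using J A by (intro emeasure_PiM_emb[symmetric] measure_pmf.prob_space_axioms) auto
  finally show "emeasure (distr (PiM (UNIV::nat set) (\<lambda>_. measure_pmf p)) (PiM UNIV (\<lambda>_. measure_pmf (map_pmf f p))) (\<lambda>\<omega> i. f (\<omega> i)))
      (prod_emb UNIV (\<lambda>_. measure_pmf (map_pmf f p)) J (Pi\<^sub>E J A))
    = emeasure (PiM UNIV (\<lambda>_. measure_pmf (map_pmf f p))) (prod_emb UNIV (\<lambda>_. measure_pmf (map_pmf f p)) J (Pi\<^sub>E J A))" .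
qed


lemma nested_fubini:
  assumes s2: "prob_space M2" and s3: "prob_space M3" and s4: "prob_space M4"
    and f: "f \<in> borel_measurable (M1 \<Otimes>\<^sub>M M2 \<Otimes>\<^sub>M M3 \<Otimes>\<^sub>M M4)"
  shows "integral\<^sup>N (M1 \<Otimes>\<^sub>M M2 \<Otimes>\<^sub>M M3 \<Otimes>\<^sub>M M4) f
     = (\<integral>\<^sup>+a. \<integral>\<^sup>+b. \<integral>\<^sup>+c. \<integral>\<^sup>+d. f (a, b, c, d) \<partial>M4 \<partial>M3 \<partial>M2 \<partial>M1)"
proof -
  have ps34: "prob_space (M3 \<Otimes>\<^sub>M M4)" by (rule prob_space_pair[OF s3 s4])
  have ps234: "prob_space (M2 \<Otimes>\<^sub>M M3 \<Otimes>\<^sub>M M4)" by (rule prob_space_pair[OF s2 ps34])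
  interpret s34: sigma_finite_measure "M3 \<Otimes>\<^sub>M M4" by (rule prob_space_imp_sigma_finite[OF ps34])
  interpret s234: sigma_finite_measure "M2 \<Otimes>\<^sub>M M3 \<Otimes>\<^sub>M M4" by (rule prob_space_imp_sigma_finite[OF ps234])
  interpret s4: sigma_finite_measure "M4" by (rule prob_space_imp_sigma_finite[OF s4])
  have "integral\<^sup>N (M1 \<Otimes>\<^sub>M M2 \<Otimes>\<^sub>M M3 \<Otimes>\<^sub>M M4) f = (\<integral>\<^sup>+a. \<integral>\<^sup>+w. f (a, w) \<partial>(M2 \<Otimes>\<^sub>M M3 \<Otimes>\<^sub>M M4) \<partial>M1)"
    using s234.nn_integral_fst[OF f] by simp
  also have "\<dots> = (\<integral>\<^sup>+a. \<integral>\<^sup>+b. \<integral>\<^sup>+w. f (a, b, w) \<partial>(M3 \<Otimes>\<^sub>M M4) \<partial>M2 \<partial>M1)"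
  proof (intro nn_integral_cong)
    fix a assume a: "a \<in> space M1"
    have "(\<lambda>w. f (a, w)) \<in> borel_measurable (M2 \<Otimes>\<^sub>M M3 \<Otimes>\<^sub>M M4)" using measurable_Pair2[OF f a] .
    from s34.nn_integral_fst[OF this] show "(\<integral>\<^sup>+w. f (a, w) \<partial>(M2 \<Otimes>\<^sub>M M3 \<Otimes>\<^sub>M M4)) = (\<integral>\<^sup>+b. \<integral>\<^sup>+w. f (a, b, w) \<partial>(M3 \<Otimes>\<^sub>M M4) \<partial>M2)"
      by simp
  qed
  also have "\<dots> = (\<integral>\<^sup>+a. \<integral>\<^sup>+b. \<integral>\<^sup>+c. \<integral>\<^sup>+d. f (a, b, c, d) \<partial>M4 \<partial>M3 \<partial>M2 \<partial>M1)"
  proof (intro nn_integral_cong)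
    fix a b assume a: "a \<in> space M1" and b: "b \<in> space M2"
    have "(\<lambda>w. f (a, w)) \<in> borel_measurable (M2 \<Otimes>\<^sub>M M3 \<Otimes>\<^sub>M M4)" using measurable_Pair2[OF f a] .
    from measurable_Pair2[OF this b] have "(\<lambda>w. f (a, b, w)) \<in> borel_measurable (M3 \<Otimes>\<^sub>M M4)" .
    from s4.nn_integral_fst[OF this] show "(\<integral>\<^sup>+w. f (a, b, w) \<partial>(M3 \<Otimes>\<^sub>M M4)) = (\<integral>\<^sup>+c. \<integral>\<^sup>+d. f (a, b, c, d) \<partial>M4 \<partial>M3)"
      by simp
  qed
  finally show ?thesis .
qed




lemma bern_map:
  assumes N: "N \<ge> 1"
  shows "map_pmf (\<lambda>j. j \<in> T) (pmf_of_set {1..N}) = bernoulli_pmf (real (card (T \<inter> {1..N})) / real N)"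
proof (rule pmf_eqI)
  fix b :: bool
  have ne: "{1..N} \<noteq> {}" using N by auto
  have c: "card (T \<inter> {1..N}) \<le> N" using card_mono[of "{1..N}" "T \<inter> {1..N}"] by auto
  have x01: "0 \<le> real (card (T \<inter> {1..N})) / real N" "real (card (T \<inter> {1..N})) / real N \<le> 1"
    using c N by auto
  have "pmf (map_pmf (\<lambda>j. j \<in> T) (pmf_of_set {1..N})) b = measure (pmf_of_set {1..N}) ((\<lambda>j. j \<in> T) -` {b})"
    by (rule pmf_map)
  also have "\<dots> = real (card ({1..N} \<inter> (\<lambda>j. j \<in> T) -` {b})) / real N"
    using ne by (subst measure_pmf_of_set) auto
  also have "\<dots> = pmf (bernoulli_pmf (real (card (T \<inter> {1..N})) / real N)) b"
  proof (cases b)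
    case True
    then show ?thesis using x01 by (simp add: Int_commute vimage_def)
  next
    case False
    have "{1..N} \<inter> (\<lambda>j. j \<in> T) -` {False} = {1..N} - (T \<inter> {1..N})" by auto
    then have "card ({1..N} \<inter> (\<lambda>j. j \<in> T) -` {False}) = N - card (T \<inter> {1..N})"
      by (simp add: card_Diff_subset)
    then show ?thesis using False x01 c N by (simp add: of_nat_diff field_simps)
  qed
  finally show "pmf (map_pmf (\<lambda>j. j \<in> T) (pmf_of_set {1..N})) b = pmf (bernoulli_pmf (real (card (T \<inter> {1..N})) / real N)) b" .
qed

lemma inner_K:
  assumes q: "0 \<le> q" "q \<le> 1" and A: "finite A"
  shows "(\<integral>\<^sup>+k. (\<Prod>i\<in>A. ennreal (pow_enat q (k i))) \<partial>PiM (UNIV::nat set) (\<lambda>i. measure_pmf Q))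
     = ennreal (pgf Q q) ^ card A"
proof -
  let ?M = "\<lambda>i::nat. measure_pmf Q"
  interpret PS: product_sigma_finite ?M
    by (intro product_sigma_finite.intro prob_space_imp_sigma_finite measure_pmf.prob_space_axioms)
  have hm: "(\<lambda>\<kappa>. ennreal (pow_enat q \<kappa>)) \<in> borel_measurable (measure_pmf Q)"
    by (subst measurable_cong_sets[OF sets_measure_pmf_count_space refl]) simp
  have rm: "(\<lambda>\<omega>. \<lambda>n\<in>A. \<omega> n) \<in> measurable (PiM UNIV ?M) (PiM A ?M)"
    by (rule measurable_restrict_subset) simp
  have d: "distr (PiM UNIV ?M) (PiM A ?M) (\<lambda>\<omega>. \<lambda>n\<in>A. \<omega> n) = PiM A ?M"
    using distr_PiM_reindex[of UNIV ?M id A, OF measure_pmf.prob_space_axioms] by simp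
  have Gm: "(\<lambda>k. \<Prod>i\<in>A. ennreal (pow_enat q (k i))) \<in> borel_measurable (PiM A ?M)"
  proof (intro borel_measurable_prod_ennreal)
    fix i assume "i \<in> A"
    then show "(\<lambda>k. ennreal (pow_enat q (k i))) \<in> borel_measurable (PiM A ?M)"
      by (intro measurable_compose[of _ _ "measure_pmf Q", OF _ hm] measurable_component_singleton)
  qed
  have "(\<integral>\<^sup>+k. (\<Prod>i\<in>A. ennreal (pow_enat q (k i))) \<partial>PiM UNIV ?M)
      = (\<integral>\<^sup>+k. (\<Prod>i\<in>A. ennreal (pow_enat q ((\<lambda>n\<in>A. k n) i))) \<partial>PiM UNIV ?M)"
    by (intro nn_integral_cong prod.cong) auto
  also have "\<dots> = (\<integral>\<^sup>+k. (\<Prod>i\<in>A. ennreal (pow_enat q (k i))) \<partial>distr (PiM UNIV ?M) (PiM A ?M) (\<lambda>\<omega>. \<lambda>n\<in>A. \<omega> n))"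
    by (rule nn_integral_distr[OF rm, symmetric]) (simp add: Gm)
  also have "\<dots> = (\<integral>\<^sup>+k. (\<Prod>i\<in>A. ennreal (pow_enat q (k i))) \<partial>PiM A ?M)"
    unfolding d ..
  also have "\<dots> = (\<Prod>i\<in>A. \<integral>\<^sup>+\<kappa>. ennreal (pow_enat q \<kappa>) \<partial>measure_pmf Q)"
    using PS.product_nn_integral_prod[OF A, of "\<lambda>i \<kappa>. ennreal (pow_enat q \<kappa>)"] hm by simp
  also have "\<dots> = ennreal (pgf Q q) ^ card A"
    using pgf_nn[OF q] by simp
  finally show ?thesis .
qed


lemma meas_PiM_pmf_borel: "(\<lambda>\<omega>. f (\<omega> i)) \<in> borel_measurable (PiM (UNIV::nat set) (\<lambda>_. measure_pmf p))"
proof (rule measurable_compose[of _ _ "measure_pmf p"])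
  show "(\<lambda>\<omega>. \<omega> i) \<in> measurable (PiM (UNIV::nat set) (\<lambda>_. measure_pmf p)) (measure_pmf p)"
    by (rule measurable_component_singleton) simp
  show "f \<in> borel_measurable (measure_pmf p)"
    by (subst measurable_cong_sets[OF sets_measure_pmf_count_space refl]) simp
qed

lemma qq_nabla:
  assumes N: "N \<ge> 1" and z: "z \<in> nabla_inf"
  shows "measure (eta_star N True z y) T = (\<Sum>m. z m * indicator T (y m)) + (1 - znorm z) * (real (card (T \<inter> {1..N})) / real N)"
proof -
  have a: "0 \<le> (\<Sum>m. z m * indicator T (y m))"
    using summable_part[OF z, of "\<lambda>m. indicator T (y m)"] nabla_nonneg[OF z]
    by (intro suminf_nonneg) auto
  have b: "0 \<le> (1 - znorm z) * real (card (T \<inter> {1..N})) / real N"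
    using nabla_le1[OF z] by auto
  show ?thesis unfolding measure_def eta_emeasure_nabla[OF N z]
    using a b by (simp add: ennreal_plus[symmetric] del: ennreal_plus)
qed

lemma qq_unif:
  assumes "\<not> (h \<and> z \<in> nabla_inf)"
  shows "measure (eta_star N h z y) T = real (card (T \<inter> {1..N})) / real N"
  unfolding measure_def eta_emeasure_unif[OF assms] by simp

lemma Ypart:
  assumes N: "N \<ge> 1" and z: "z \<in> nabla_inf" and x: "x = real (card (T \<inter> {1..N})) / real N"
  shows "(\<integral>\<^sup>+y. ennreal ((pgf Q (measure (eta_star N True z y) T)) ^ n) \<partial>PiM UNIV (\<lambda>_. measure_pmf (pmf_of_set {1..N})))
    = (\<integral>\<^sup>+b. ennreal ((pgf Q ((\<Sum>i. if b i then z i else 0) + x * (1 - znorm z))) ^ n) \<partial>PiM UNIV (\<lambda>_. measure_pmf (bernoulli_pmf x)))"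
proof -
  let ?YP = "PiM (UNIV::nat set) (\<lambda>_. measure_pmf (pmf_of_set {1..N}))"
  let ?BP = "PiM (UNIV::nat set) (\<lambda>_. measure_pmf (map_pmf (\<lambda>j. j \<in> T) (pmf_of_set {1..N})))"
  define F where "F = (\<lambda>b::nat \<Rightarrow> bool. ennreal ((pgf Q ((\<Sum>i. if b i then z i else 0) + x * (1 - znorm z))) ^ n))"
  have Fm: "F \<in> borel_measurable ?BP"
  proof -
    have [measurable]: "(\<lambda>b::nat \<Rightarrow> bool. if b i then z i else 0) \<in> borel_measurable ?BP" for i
      by (rule meas_PiM_pmf_borel)
    show ?thesis unfolding F_def by measurable
  qed
  have m: "(\<lambda>\<omega> i. \<omega> i \<in> T) \<in> measurable ?YP ?BP"
    by (rule measurable_PiM_single') (auto intro: meas_PiM_pmf_comp)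
  have "(\<integral>\<^sup>+b. F b \<partial>PiM UNIV (\<lambda>_. measure_pmf (bernoulli_pmf x))) = (\<integral>\<^sup>+b. F b \<partial>?BP)"
    using bern_map[OF N, of T] x by simp
  also have "\<dots> = (\<integral>\<^sup>+b. F b \<partial>distr ?YP ?BP (\<lambda>\<omega> i. \<omega> i \<in> T))"
    using distr_PiM_map[of "pmf_of_set {1..N}" "\<lambda>j. j \<in> T"] by simp
  also have "\<dots> = (\<integral>\<^sup>+y. F (\<lambda>i. y i \<in> T) \<partial>?YP)"
    by (rule nn_integral_distr[OF m]) (simp only: measurable_distr_eq1 Fm)
  also have "\<dots> = (\<integral>\<^sup>+y. ennreal ((pgf Q (measure (eta_star N True z y) T)) ^ n) \<partial>?YP)"
  proof (intro nn_integral_cong)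
    fix y :: "nat \<Rightarrow> nat"
    have "(\<Sum>i. if y i \<in> T then z i else 0) = (\<Sum>m. z m * indicator T (y m))"
      by (intro suminf_cong) (auto simp: indicator_def)
    then show "F (\<lambda>i. y i \<in> T) = ennreal ((pgf Q (measure (eta_star N True z y) T)) ^ n)"
      unfolding F_def qq_nabla[OF N z] x by (simp add: mult.commute)
  qed
  finally show ?thesis unfolding F_def by simp
qed


definition Bev :: "nat set \<Rightarrow> (nat \<Rightarrow> bool) \<Rightarrow> gdata set" where
  "Bev A t = {d. \<forall>i\<in>A. \<forall>j. enat j < gK d i \<longrightarrow> t (gL d i j)}"

lemma comp_KS[measurable]: "(\<lambda>k. k i) \<in> measurable KS (count_space UNIV)"
  by (rule measurable_component_singleton) simp

lemma comp_LS[measurable]: "(\<lambda>l. l i j) \<in> measurable LS (count_space UNIV)"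
proof -
  have "(\<lambda>l. l i) \<in> measurable LS (PiM UNIV (\<lambda>j. count_space (UNIV::nat set)))"
    by (rule measurable_component_singleton) simp
  moreover have "(\<lambda>m. m j) \<in> measurable (PiM UNIV (\<lambda>j. count_space (UNIV::nat set))) (count_space UNIV)"
    by (rule measurable_component_singleton) simp
  ultimately show ?thesis by (rule measurable_compose)
qed

lemma gK_meas[measurable]: "(\<lambda>d. gK d i) \<in> measurable gspace (count_space UNIV)"
  unfolding gK_def gspace_def by measurable

lemma gL_meas[measurable]: "(\<lambda>d. gL d i j) \<in> measurable gspace (count_space UNIV)"
  unfolding gL_def gspace_def by measurable

lemma Bev_sets: "Bev A t \<in> sets gspace"
proof -
  have [measurable]: "Measurable.pred gspace (\<lambda>d. enat j < gK d i)" for i j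
    using measurable_compose[OF gK_meas, of "\<lambda>k. enat j < k" "count_space UNIV" i] by simp
  have [measurable]: "Measurable.pred gspace (\<lambda>d. t (gL d i j))" for i j
    using measurable_compose[OF gL_meas, of t "count_space UNIV" i j] by simp
  have "Measurable.pred gspace (\<lambda>d. \<forall>i\<in>A. \<forall>j. enat j < gK d i \<longrightarrow> t (gL d i j))" by measurable
  then show ?thesis unfolding Bev_def pred_def by (simp add: space_gspace)
qed


abbreviation "YP N \<equiv> PiM (UNIV::nat set) (\<lambda>_. measure_pmf (pmf_of_set {1..N}))"
abbreviation "KQ Q \<equiv> PiM (UNIV::nat set) (\<lambda>_. measure_pmf (Q::enat pmf))"
abbreviation "BP x \<equiv> PiM (UNIV::nat set) (\<lambda>_. measure_pmf (bernoulli_pmf x))"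

lemma prob_YP: "prob_space (YP N)" by (intro prob_space_PiM measure_pmf.prob_space_axioms)
lemma prob_KQ: "prob_space (KQ Q)" by (intro prob_space_PiM measure_pmf.prob_space_axioms)
lemma prob_BP: "prob_space (BP x)" by (intro prob_space_PiM measure_pmf.prob_space_axioms)

lemma Y_bounds:
  assumes z: "z \<in> nabla_inf" and x: "0 \<le> x" "x \<le> 1"
  shows "0 \<le> (\<Sum>i. if b i then z i else 0) + x * (1 - znorm z)" "(\<Sum>i. if b i then z i else 0) + x * (1 - znorm z) \<le> 1"
proof -
  have eq: "(\<lambda>i. if b i then z i else 0) = (\<lambda>i. z i * (if b i then 1 else 0))" by auto
  have sm: "summable (\<lambda>i. if b i then z i else 0)"
    unfolding eq by (rule summable_part[OF z]) auto
  have a: "0 \<le> (\<Sum>i. if b i then z i else 0)"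
    using sm nabla_nonneg[OF z] by (intro suminf_nonneg) auto
  have b: "(\<Sum>i. if b i then z i else 0) \<le> znorm z"
    unfolding znorm_def using sm nabla_summable[OF z] nabla_nonneg[OF z] by (intro suminf_le) auto
  have c: "znorm z \<le> 1" by (rule nabla_le1[OF z])
  have d: "x * (1 - znorm z) \<le> 1 - znorm z" using x c by (simp add: mult_left_le_one_le)
  show "0 \<le> (\<Sum>i. if b i then z i else 0) + x * (1 - znorm z)" using a x c by simp
  show "(\<Sum>i. if b i then z i else 0) + x * (1 - znorm z) \<le> 1" using b d by simp
qed

lemma Phi_meas:
  "(\<lambda>(z, b). (pgf Q ((\<Sum>i. if b i then z i else 0) + x * (1 - znorm z))) ^ n) \<in> borel_measurable (ZS \<Otimes>\<^sub>M BP x)"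
proof -
  have [measurable]: "(\<lambda>b::nat \<Rightarrow> bool. if b i then c else 0) \<in> borel_measurable (BP x)" for i and c :: real
    by (rule meas_PiM_pmf_borel)
  have [measurable]: "(\<lambda>w::(nat \<Rightarrow> real) \<times> (nat \<Rightarrow> bool). if snd w i then fst w i else 0) \<in> borel_measurable (ZS \<Otimes>\<^sub>M BP x)" for i
  proof -
    have "(\<lambda>w::(nat \<Rightarrow> real) \<times> (nat \<Rightarrow> bool). fst w i * (if snd w i then 1 else 0)) \<in> borel_measurable (ZS \<Otimes>\<^sub>M BP x)"
      by measurable
    then show ?thesis by (simp add: if_distrib cong: if_cong)
  qed
  show ?thesis unfolding znorm_def case_prod_beta by measurable
qed

lemma nuN_nn:
  assumes Xs: "sets \<Xi> = sets ZS" and Xp: "prob_space \<Xi>" and Xn: "AE z in \<Xi>. z \<in> nabla_inf"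
    and x: "0 \<le> x" "x \<le> 1"
  shows "(\<integral>\<^sup>+w. ennreal ((pgf Q ((\<Sum>i. if snd w i then fst w i else 0) + x * (1 - znorm (fst w)))) ^ n) \<partial>(\<Xi> \<Otimes>\<^sub>M BP x))
     = ennreal (nuN Q \<Xi> x n)" and "0 \<le> nuN Q \<Xi> x n"
proof -
  let ?f = "\<lambda>w::(nat \<Rightarrow> real) \<times> (nat \<Rightarrow> bool). (pgf Q ((\<Sum>i. if snd w i then fst w i else 0) + x * (1 - znorm (fst w)))) ^ n"
  interpret X: prob_space \<Xi> by fact
  interpret B: prob_space "BP x" by (rule prob_BP)
  interpret XB: pair_prob_space \<Xi> "BP x" ..
  have fm: "?f \<in> borel_measurable (\<Xi> \<Otimes>\<^sub>M BP x)"
  proof -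
    have e: "measurable (\<Xi> \<Otimes>\<^sub>M BP x) (borel::real measure) = measurable (ZS \<Otimes>\<^sub>M BP x) borel"
      by (rule measurable_cong_sets[OF sets_pair_measure_cong[OF Xs refl] refl])
    show ?thesis using Phi_meas[of Q x n] unfolding e case_prod_beta .
  qed
  have predn: "{w \<in> space (\<Xi> \<Otimes>\<^sub>M BP x). fst w \<in> nabla_inf} \<in> sets (\<Xi> \<Otimes>\<^sub>M BP x)"
  proof -
    have "Measurable.pred (ZS \<Otimes>\<^sub>M BP x) (\<lambda>w. fst w \<in> nabla_inf)" by measurable
    then have "Measurable.pred (\<Xi> \<Otimes>\<^sub>M BP x) (\<lambda>w. fst w \<in> nabla_inf)"
      using measurable_cong_sets[OF sets_pair_measure_cong[OF Xs refl] refl] by blast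
    then show ?thesis by (simp add: pred_def)
  qed
  have AEn: "AE w in \<Xi> \<Otimes>\<^sub>M BP x. fst w \<in> nabla_inf"
    by (rule XB.AE_pair_measure[OF predn]) (use Xn in auto)
  have AEb: "AE w in \<Xi> \<Otimes>\<^sub>M BP x. 0 \<le> ?f w \<and> ?f w \<le> 1"
    using AEn
  proof eventually_elim
    case (elim w)
    note yb = Y_bounds[OF elim x, of "snd w"]
    show ?case using pgf_bounds[OF yb, of Q] by (simp add: power_le_one)
  qed
  have int: "integrable (\<Xi> \<Otimes>\<^sub>M BP x) ?f"
    by (rule XB.P.integrable_const_bound[where B=1]) (use AEb fm in auto)
  have "(\<integral>\<^sup>+w. ennreal (?f w) \<partial>(\<Xi> \<Otimes>\<^sub>M BP x)) = ennreal (integral\<^sup>L (\<Xi> \<Otimes>\<^sub>M BP x) ?f)"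
    by (rule nn_integral_eq_integral[OF int]) (use AEb in auto)
  also have "integral\<^sup>L (\<Xi> \<Otimes>\<^sub>M BP x) ?f = nuN Q \<Xi> x n"
    unfolding nuN_def by (intro Bochner_Integration.integral_cong) (auto simp: split_beta)
  finally show "(\<integral>\<^sup>+w. ennreal (?f w) \<partial>(\<Xi> \<Otimes>\<^sub>M BP x)) = ennreal (nuN Q \<Xi> x n)" .
  have "0 \<le> integral\<^sup>L (\<Xi> \<Otimes>\<^sub>M BP x) ?f" by (rule integral_nonneg_AE) (use AEb in auto)
  also have "integral\<^sup>L (\<Xi> \<Otimes>\<^sub>M BP x) ?f = nuN Q \<Xi> x n"
    unfolding nuN_def by (intro Bochner_Integration.integral_cong) (auto simp: split_beta)
  finally show "0 \<le> nuN Q \<Xi> x n" .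
qed


lemma gen_law_Bev:
  assumes N: "N \<ge> 1" and Xs: "sets \<Xi> = sets ZS" and Xp: "prob_space \<Xi>" and Xn: "AE z in \<Xi>. z \<in> nabla_inf"
    and gam: "0 \<le> \<gamma>" "\<gamma> \<le> 1" and A: "finite A" "card A = n"
    and x: "x = real (card ({j. t j} \<inter> {1..N})) / real N"
  shows "emeasure (gen_law N \<gamma> Q \<Xi>) (Bev A t) = ennreal (S_fun \<gamma> Q \<Xi> x n)"
proof -
  define T where "T = {j. t j}"
  define qq where "qq h z y = measure (eta_star N h z y) T" for h z y
  have q01: "0 \<le> qq h z y" "qq h z y \<le> 1" for h z y
    unfolding qq_def using prob_eta_star[OF N, of h z y] by (auto intro: prob_space.prob_le_1)
  have x01: "0 \<le> x" "x \<le> 1"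
    using x N card_mono[of "{1..N}" "{j. t j} \<inter> {1..N}"] by auto
  define f where "f = (\<lambda>p::bool \<times> (nat \<Rightarrow> real) \<times> (nat \<Rightarrow> nat) \<times> (nat \<Rightarrow> enat).
      \<Prod>i\<in>A. ennreal (pow_enat (qq (fst p) (fst (snd p)) (fst (snd (snd p)))) (snd (snd (snd p)) i)))"
  interpret X: prob_space \<Xi> by fact
  have "emeasure (gen_law N \<gamma> Q \<Xi>) (Bev A t) = (\<integral>\<^sup>+p. f p \<partial>PM N \<gamma> Q \<Xi>)"
  proof -
    have "emeasure (gen_law N \<gamma> Q \<Xi>) (Bev A t) = (\<integral>\<^sup>+p. emeasure (LK N p)
      {l. (fst p, fst (snd p), fst (snd (snd p)), snd (snd (snd p)), l) \<in> Bev A t} \<partial>PM N \<gamma> Q \<Xi>)"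
      by (rule gen_law_emeasure[OF N Xs Bev_sets])
    also have "\<dots> = (\<integral>\<^sup>+p. f p \<partial>PM N \<gamma> Q \<Xi>)"
    proof (intro nn_integral_cong)
      fix p :: "bool \<times> (nat \<Rightarrow> real) \<times> (nat \<Rightarrow> nat) \<times> (nat \<Rightarrow> enat)"
      have e: "{l. (fst p, fst (snd p), fst (snd (snd p)), snd (snd (snd p)), l) \<in> Bev A t}
          = {l. \<forall>i\<in>A. \<forall>j. enat j < snd (snd (snd p)) i \<longrightarrow> t (l i j)}"
        by (simp add: Bev_def gK_def gL_def)
      show "emeasure (LK N p) {l. (fst p, fst (snd p), fst (snd (snd p)), snd (snd (snd p)), l) \<in> Bev A t} = f p"
        unfolding e LK_def f_def qq_def T_def etaP_def
        by (rule outer_label[OF prob_eta_star[OF N] _ _ A(1)]) (simp_all add: eta_star_def)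
    qed
    finally show ?thesis .
  qed
  also have "\<dots> = (\<integral>\<^sup>+h. \<integral>\<^sup>+z. \<integral>\<^sup>+y. \<integral>\<^sup>+k. f (h, z, y, k) \<partial>KQ Q \<partial>YP N \<partial>\<Xi> \<partial>measure_pmf (bernoulli_pmf \<gamma>))"
  proof -
    have fPS: "f \<in> borel_measurable PS"
    proof -
      have em: "(\<lambda>p. emeasure (etaP N p) T) \<in> borel_measurable PS"
        by (rule measurable_compose[OF etaP_kernel[OF N] measurable_emeasure_subprob_algebra]) simp
      have qm: "(\<lambda>p. qq (fst p) (fst (snd p)) (fst (snd (snd p)))) \<in> borel_measurable PS"
        unfolding qq_def measure_def etaP_def[symmetric] using em by measurable
      have km: "(\<lambda>p::bool \<times> (nat \<Rightarrow> real) \<times> (nat \<Rightarrow> nat) \<times> (nat \<Rightarrow> enat). snd (snd (snd p)) i) \<in> measurable PS (count_space UNIV)" for i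
        by measurable
      show ?thesis unfolding f_def
        by (intro borel_measurable_prod_ennreal measurable_compose[OF pow_enat_comp[OF qm km] measurable_ennreal])
    qed
    then have fPM: "f \<in> borel_measurable (PM N \<gamma> Q \<Xi>)"
      using measurable_cong_sets[OF sets_PM[OF Xs] refl] by blast
    show ?thesis unfolding PM_def
      by (rule nested_fubini[OF Xp prob_YP prob_KQ fPM[unfolded PM_def]])
  qed
  also have "\<dots> = (\<integral>\<^sup>+h. \<integral>\<^sup>+z. \<integral>\<^sup>+y. ennreal ((pgf Q (qq h z y)) ^ n) \<partial>YP N \<partial>\<Xi> \<partial>measure_pmf (bernoulli_pmf \<gamma>))"
  proof (intro nn_integral_cong)
    fix h z y
    show "(\<integral>\<^sup>+k. f (h, z, y, k) \<partial>KQ Q) = ennreal ((pgf Q (qq h z y)) ^ n)"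
      unfolding f_def using inner_K[where Q=Q, OF q01(1)[of h z y] q01(2)[of h z y] A(1)] A(2) pgf_bounds[where Q=Q, OF q01(1)[of h z y] q01(2)[of h z y]]
      by (simp add: ennreal_power)
  qed
  also have "\<dots> = ennreal (nuN Q \<Xi> x n) * ennreal \<gamma> + ennreal ((pgf Q x) ^ n) * ennreal (1 - \<gamma>)"
  proof -
    have GF: "(\<integral>\<^sup>+z. \<integral>\<^sup>+y. ennreal ((pgf Q (qq False z y)) ^ n) \<partial>YP N \<partial>\<Xi>) = ennreal ((pgf Q x) ^ n)"
    proof -
      have "qq False z y = x" for z y unfolding qq_def T_def x by (rule qq_unif) simp
      moreover have "emeasure (YP N) (space (YP N)) = 1" by (rule prob_space.emeasure_space_1[OF prob_YP])
      ultimately show ?thesis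
        using X.emeasure_space_1 by (simp del: One_nat_def)
    qed
    have GT: "(\<integral>\<^sup>+z. \<integral>\<^sup>+y. ennreal ((pgf Q (qq True z y)) ^ n) \<partial>YP N \<partial>\<Xi>) = ennreal (nuN Q \<Xi> x n)"
    proof -
      interpret B: prob_space "BP x" by (rule prob_BP)
      have "(\<integral>\<^sup>+z. \<integral>\<^sup>+y. ennreal ((pgf Q (qq True z y)) ^ n) \<partial>YP N \<partial>\<Xi>)
          = (\<integral>\<^sup>+z. \<integral>\<^sup>+b. ennreal ((pgf Q ((\<Sum>i. if b i then z i else 0) + x * (1 - znorm z))) ^ n) \<partial>BP x \<partial>\<Xi>)"
        using Xn
      proof (intro nn_integral_cong_AE, eventually_elim)
        case (elim z)
        have zn: "z \<in> nabla_inf" using elim by blast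
        show ?case unfolding qq_def T_def by (rule Ypart[OF N zn x])
      qed
      also have "\<dots> = (\<integral>\<^sup>+w. ennreal ((pgf Q ((\<Sum>i. if snd w i then fst w i else 0) + x * (1 - znorm (fst w)))) ^ n) \<partial>(\<Xi> \<Otimes>\<^sub>M BP x))"
      proof -
        have e: "measurable (\<Xi> \<Otimes>\<^sub>M BP x) (borel::real measure) = measurable (ZS \<Otimes>\<^sub>M BP x) borel"
          by (rule measurable_cong_sets[OF sets_pair_measure_cong[OF Xs refl] refl])
        have "(\<lambda>w::(nat \<Rightarrow> real) \<times> (nat \<Rightarrow> bool). (pgf Q ((\<Sum>i. if snd w i then fst w i else 0) + x * (1 - znorm (fst w)))) ^ n) \<in> borel_measurable (\<Xi> \<Otimes>\<^sub>M BP x)"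
          using Phi_meas[of Q x n] unfolding e case_prod_beta .
        then have "(\<lambda>w::(nat \<Rightarrow> real) \<times> (nat \<Rightarrow> bool). ennreal ((pgf Q ((\<Sum>i. if snd w i then fst w i else 0) + x * (1 - znorm (fst w)))) ^ n)) \<in> borel_measurable (\<Xi> \<Otimes>\<^sub>M BP x)"
          by (rule measurable_compose[OF _ measurable_ennreal])
        from B.nn_integral_fst[OF this] show ?thesis by (simp cong: if_cong)
      qed
      also have "\<dots> = ennreal (nuN Q \<Xi> x n)" by (rule nuN_nn[OF Xs Xp Xn x01])
      finally show ?thesis .
    qed
    show ?thesis using gam GF GT by simp
  qed
  also have "\<dots> = ennreal (S_fun \<gamma> Q \<Xi> x n)"
  proof -
    have p0: "0 \<le> (pgf Q x) ^ n" using pgf_bounds[OF x01] by simp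
    have n0: "0 \<le> nuN Q \<Xi> x n" by (rule nuN_nn[OF Xs Xp Xn x01])
    show ?thesis unfolding S_fun_def using p0 n0 gam
      by (simp add: ennreal_mult[symmetric] ennreal_plus[symmetric] mult.commute del: ennreal_plus)
  qed
  finally show ?thesis .
qed




lemma type0_cong:
  assumes "\<And>h. 1 \<le> h \<Longrightarrow> h \<le> k \<Longrightarrow> Gs h = Gs' h"
  shows "type0 Gs init k = type0 Gs' init k"
  using assms
proof (induction k)
  case 0 then show ?case by (simp add: fun_eq_iff)
next
  case (Suc k)
  have ih: "type0 Gs init k = type0 Gs' init k" using Suc by auto
  have "Gs (Suc k) = Gs' (Suc k)" using Suc.prems by auto
  then show ?case using ih by (simp add: fun_eq_iff)
qed

lemma type0_meas:
  assumes "k \<le> m"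
  shows "Measurable.pred (PiM {1..m} (\<lambda>_. gspace)) (\<lambda>a. type0 a init k j)"
  using assms
proof (induction k arbitrary: j)
  case 0 then show ?case by simp
next
  case (Suc k)
  let ?P = "PiM {1..m} (\<lambda>_. gspace)"
  have ih: "Measurable.pred ?P (\<lambda>a. type0 a init k v)" for v using Suc by auto
  have am: "(\<lambda>a. a (Suc k)) \<in> measurable ?P gspace"
    using Suc.prems by (intro measurable_component_singleton) auto
  have [measurable]: "Measurable.pred ?P (\<lambda>a. enat l < gK (a (Suc k)) j)" for l
    using measurable_compose[OF measurable_compose[OF am gK_meas[of j]], of "\<lambda>v. enat l < v" "count_space UNIV"] by simp
  have gm: "(\<lambda>a. gL (a (Suc k)) j l) \<in> measurable ?P (count_space UNIV)" for l
    by (rule measurable_compose[OF am gL_meas])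
  have [measurable]: "Measurable.pred ?P (\<lambda>a. type0 a init k (gL (a (Suc k)) j l))" for l
    by (rule measurable_compose_countable'[where f="\<lambda>v a. type0 a init k v", OF ih gm]) simp
  have eq: "(\<lambda>a. type0 a init (Suc k) j) = (\<lambda>a. \<forall>l. enat l < gK (a (Suc k)) j \<longrightarrow> type0 a init k (gL (a (Suc k)) j l))"
    by (simp add: fun_eq_iff)
  show ?case unfolding eq by measurable
qed


lemma card_filter_sum: "finite S \<Longrightarrow> real (card {i \<in> S. P i}) = (\<Sum>i\<in>S. if P i then 1 else 0)"
  by (simp add: sum.If_cases Int_def conj_commute)

lemma freq0_meas:
  "Measurable.pred (PiM {1..m} (\<lambda>_. gspace)) (\<lambda>a. freq0 N a init m = x)"
proof -
  have [measurable]: "Measurable.pred (PiM {1..m} (\<lambda>_. gspace)) (\<lambda>a. type0 a init m i)" for i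
    by (rule type0_meas) simp
  have eq: "(\<lambda>a. freq0 N a init m) = (\<lambda>a. (\<Sum>i\<in>{1..N}. if type0 a init m i then 1 else 0) / real N)"
    unfolding freq0_def by (subst card_filter_sum) simp_all
  have "(\<lambda>a. freq0 N a init m) \<in> borel_measurable (PiM {1..m} (\<lambda>_. gspace))" unfolding eq by measurable
  then show ?thesis by measurable
qed

lemma SS_sets:
  "{w \<in> space (PiM {1..m} (\<lambda>_. gspace) \<Otimes>\<^sub>M gspace). freq0 N (fst w) init m = x \<and> snd w \<in> Bev A (\<lambda>v. type0 (fst w) init m v)}
    \<in> sets (PiM {1..m} (\<lambda>_. gspace) \<Otimes>\<^sub>M gspace)"
proof -
  let ?P = "PiM {1..m} (\<lambda>_. gspace) \<Otimes>\<^sub>M gspace"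
  have tm: "Measurable.pred ?P (\<lambda>w. type0 (fst w) init m v)" for v
    by (rule measurable_compose[OF measurable_fst type0_meas]) simp
  have [measurable]: "Measurable.pred ?P (\<lambda>w. freq0 N (fst w) init m = x)"
    by (rule measurable_compose[OF measurable_fst freq0_meas])
  have [measurable]: "Measurable.pred ?P (\<lambda>w. enat l < gK (snd w) i)" for l i
    using measurable_compose[OF measurable_compose[OF measurable_snd gK_meas[of i]], of "\<lambda>v. enat l < v" "count_space UNIV"] by simp
  have gm: "(\<lambda>w. gL (snd w) i l) \<in> measurable ?P (count_space UNIV)" for i l
    by (rule measurable_compose[OF measurable_snd gL_meas])
  have [measurable]: "Measurable.pred ?P (\<lambda>w. type0 (fst w) init m (gL (snd w) i l))" for i l
    by (rule measurable_compose_countable'[where f="\<lambda>v w. type0 (fst w) init m v", OF tm gm]) simp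
  have "Measurable.pred ?P (\<lambda>w. freq0 N (fst w) init m = x \<and> (\<forall>i\<in>A. \<forall>l. enat l < gK (snd w) i \<longrightarrow> type0 (fst w) init m (gL (snd w) i l)))"
    by measurable
  then show ?thesis by (simp add: pred_def Bev_def)
qed

theorem proposition2p5:
  fixes M :: "'a measure" and G :: "nat \<Rightarrow> 'a \<Rightarrow> gdata"
    and N :: nat and \<gamma> :: real and Q :: "enat pmf" and \<Xi> :: "(nat \<Rightarrow> real) measure"
    and init :: "nat \<Rightarrow> bool" and g n :: nat and x :: real and A :: "nat set"
  assumes N: "N \<ge> 1"
    and gamma: "0 \<le> \<gamma>" "\<gamma> \<le> 1"
    and Xi_prob: "prob_space \<Xi>"
    and Xi_sets: "sets \<Xi> = sets (\<Pi>\<^sub>M m\<in>UNIV. (borel :: real measure))"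
    and Xi_nabla: "AE z in \<Xi>. z \<in> nabla_inf"
    and M: "prob_space M"
    and indep: "prob_space.indep_vars M (\<lambda>_. gspace) G {1..}"
    and law: "\<And>h. h \<ge> 1 \<Longrightarrow> distr M gspace (G h) = gen_law N \<gamma> Q \<Xi>"
    and g: "g \<ge> 1"
    and A: "A \<subseteq> {1..N}" "card A = n"
    and pos: "\<P>(\<omega> in M. freq0 N (\<lambda>h. G h \<omega>) init (g - 1) = x) > 0"
  shows "\<P>(\<omega> in M. (\<forall>i\<in>A. type0 (\<lambda>h. G h \<omega>) init g i)
                 \<bar> freq0 N (\<lambda>h. G h \<omega>) init (g - 1) = x)
         = S_fun \<gamma> Q \<Xi> x n"
proof -
  interpret M: prob_space M by (rule M)
  define m where "m = g - 1"
  have gm: "g = Suc m" using g by (simp add: m_def)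
  define K where "K = {1..m}"
  define R where "R \<omega> = restrict (\<lambda>i. G i \<omega>) K" for \<omega>
  define R2 where "R2 \<omega> = restrict (\<lambda>i. G i \<omega>) {g}" for \<omega>
  define PK where "PK = PiM K (\<lambda>_. gspace)"
  define PG where "PG = PiM {g} (\<lambda>_. gspace)"
  define S where "S = S_fun \<gamma> Q \<Xi> x n"
  have iv: "M.indep_var PK R PG R2"
    unfolding PK_def PG_def R_def R2_def by (rule M.indep_var_restrict[OF indep]) (auto simp: gm K_def)
  have rvR: "R \<in> measurable M PK" using M.indep_var_rv1[OF iv] .
  have rvR2: "R2 \<in> measurable M PG" using M.indep_var_rv2[OF iv] .
  have rvG: "G g \<in> measurable M gspace"
    using indep g unfolding M.indep_vars_def by auto
  have joint: "distr M PK R \<Otimes>\<^sub>M distr M PG R2 = distr M (PK \<Otimes>\<^sub>M PG) (\<lambda>\<omega>. (R \<omega>, R2 \<omega>))"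
    using iv[unfolded M.indep_var_distribution_eq] by simp
  have GLp: "prob_space (distr M PG R2)" by (rule M.prob_space_distr[OF rvR2])
  define SS0 where "SS0 = {w \<in> space (PK \<Otimes>\<^sub>M gspace). freq0 N (fst w) init m = x \<and> snd w \<in> Bev A (\<lambda>v. type0 (fst w) init m v)}"
  have SS0s: "SS0 \<in> sets (PK \<Otimes>\<^sub>M gspace)" unfolding SS0_def PK_def K_def by (rule SS_sets)
  define SS where "SS = {w \<in> space (PK \<Otimes>\<^sub>M PG). freq0 N (fst w) init m = x \<and> snd w g \<in> Bev A (\<lambda>v. type0 (fst w) init m v)}"
  have pgm: "(\<lambda>b. b g) \<in> measurable PG gspace" unfolding PG_def by (rule measurable_component_singleton) simp
  have SSs: "SS \<in> sets (PK \<Otimes>\<^sub>M PG)"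
  proof -
    have mm: "(\<lambda>w. (fst w, snd w g)) \<in> measurable (PK \<Otimes>\<^sub>M PG) (PK \<Otimes>\<^sub>M gspace)"
      by (intro measurable_Pair measurable_fst measurable_compose[OF measurable_snd pgm])
    have "SS = (\<lambda>w. (fst w, snd w g)) -` SS0 \<inter> space (PK \<Otimes>\<^sub>M PG)"
      by (auto simp: SS_def SS0_def space_pair_measure space_gspace)
    then show ?thesis using measurable_sets[OF mm SS0s] by simp
  qed
  have CKs: "{a \<in> space PK. freq0 N a init m = x} \<in> sets PK"
    using freq0_meas[where m=m and N=N and init=init and x=x] unfolding PK_def K_def pred_def .
  have t0: "type0 (\<lambda>h. G h \<omega>) init m = type0 (R \<omega>) init m" for \<omega>
    by (rule type0_cong) (simp add: R_def K_def)
  have f0: "freq0 N (\<lambda>h. G h \<omega>) init m = freq0 N (R \<omega>) init m" for \<omega>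
    unfolding freq0_def t0 ..
  have R2g: "R2 \<omega> g = G g \<omega>" for \<omega> by (simp add: R2_def)
  have key: "(\<lambda>\<omega>. (R \<omega>, R2 \<omega>)) -` SS \<inter> space M
      = {\<omega> \<in> space M. (\<forall>i\<in>A. type0 (\<lambda>h. G h \<omega>) init g i) \<and> freq0 N (\<lambda>h. G h \<omega>) init (g - 1) = x}"
  proof -
    have "(R \<omega>, R2 \<omega>) \<in> space (PK \<Otimes>\<^sub>M PG)" if "\<omega> \<in> space M" for \<omega>
      using measurable_space[OF rvR that] measurable_space[OF rvR2 that] by (simp add: space_pair_measure)
    then show ?thesis
      unfolding SS_def using f0 t0 R2g by (auto simp: gm Bev_def)
  qed
  have keyC: "R -` {a \<in> space PK. freq0 N a init m = x} \<inter> space M = {\<omega> \<in> space M. freq0 N (\<lambda>h. G h \<omega>) init (g - 1) = x}"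
    using measurable_space[OF rvR] f0 by (auto simp: m_def)
  have x01: "0 \<le> x" "x \<le> 1"
  proof -
    have "{\<omega> \<in> space M. freq0 N (\<lambda>h. G h \<omega>) init (g - 1) = x} \<noteq> {}"
      using pos by (metis measure_empty less_irrefl)
    then obtain \<omega> where "freq0 N (\<lambda>h. G h \<omega>) init (g - 1) = x" by blast
    moreover have "card {i \<in> {1..N}. type0 (\<lambda>h. G h \<omega>) init (g - 1) i} \<le> card {1..N}"
      by (rule card_mono) auto
    ultimately show "0 \<le> x" "x \<le> 1" using N unfolding freq0_def by auto
  qed
  have S0: "0 \<le> S"
  proof -
    have "0 \<le> (pgf Q x) ^ n" using pgf_bounds[OF x01] by simp
    moreover have "0 \<le> nuN Q \<Xi> x n" by (rule nuN_nn(2)[OF Xi_sets Xi_prob Xi_nabla x01])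
    ultimately show ?thesis unfolding S_def S_fun_def using gamma by simp
  qed
  have Bs: "Bev A t \<in> sets gspace" for t by (rule Bev_sets)
  have GLev: "emeasure (distr M PG R2) ((\<lambda>b. b g) -` B \<inter> space PG) = emeasure (gen_law N \<gamma> Q \<Xi>) B" if B: "B \<in> sets gspace" for B
  proof -
    have "emeasure (distr M PG R2) ((\<lambda>b. b g) -` B \<inter> space PG) = emeasure M (R2 -` ((\<lambda>b. b g) -` B \<inter> space PG) \<inter> space M)"
      by (rule emeasure_distr[OF rvR2 measurable_sets[OF pgm B]])
    also have "R2 -` ((\<lambda>b. b g) -` B \<inter> space PG) \<inter> space M = G g -` B \<inter> space M"
      using measurable_space[OF rvR2] R2g by auto
    also have "emeasure M (G g -` B \<inter> space M) = emeasure (distr M gspace (G g)) B"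
      by (rule emeasure_distr[OF rvG B, symmetric])
    finally show ?thesis using law[OF g] by simp
  qed
  have "emeasure (distr M PK R \<Otimes>\<^sub>M distr M PG R2) SS = (\<integral>\<^sup>+a. emeasure (distr M PG R2) (Pair a -` SS) \<partial>distr M PK R)"
    by (rule sigma_finite_measure.emeasure_pair_measure_alt[OF prob_space_imp_sigma_finite[OF GLp]])
       (use SSs in simp)
  also have "\<dots> = (\<integral>\<^sup>+a. ennreal S * indicator {a \<in> space PK. freq0 N a init m = x} a \<partial>distr M PK R)"
  proof (intro nn_integral_cong)
    fix a assume a: "a \<in> space (distr M PK R)"
    then have aK: "a \<in> space PK" by simp
    show "emeasure (distr M PG R2) (Pair a -` SS) = ennreal S * indicator {a \<in> space PK. freq0 N a init m = x} a"
    proof (cases "freq0 N a init m = x")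
      case True
      have fa: "finite A" by (rule finite_subset[OF A(1)]) simp
      have st: "{i \<in> {1..N}. type0 a init m i} = {j. type0 a init m j} \<inter> {1..N}" by auto
      have xe: "x = real (card ({j. type0 a init m j} \<inter> {1..N})) / real N"
        using True[unfolded freq0_def st] by simp
      have pre: "Pair a -` SS = (\<lambda>b. b g) -` Bev A (\<lambda>v. type0 a init m v) \<inter> space PG"
        unfolding SS_def using aK True by (auto simp: space_pair_measure)
      have "emeasure (distr M PG R2) (Pair a -` SS) = emeasure (gen_law N \<gamma> Q \<Xi>) (Bev A (\<lambda>v. type0 a init m v))"
        unfolding pre by (rule GLev[OF Bs])
      also have "\<dots> = ennreal S"
        unfolding S_def by (rule gen_law_Bev[OF N Xi_sets Xi_prob Xi_nabla gamma fa A(2) xe])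
      finally show ?thesis using aK True by simp
    next
      case False
      then have "Pair a -` SS = {}" by (auto simp: SS_def)
      then show ?thesis using False by simp
    qed
  qed
  also have "\<dots> = ennreal S * emeasure (distr M PK R) {a \<in> space PK. freq0 N a init m = x}"
    by (rule nn_integral_cmult_indicator) (use CKs in simp)
  also have "emeasure (distr M PK R) {a \<in> space PK. freq0 N a init m = x} = emeasure M {\<omega> \<in> space M. freq0 N (\<lambda>h. G h \<omega>) init (g - 1) = x}"
    by (simp only: emeasure_distr[OF rvR CKs] keyC)
  finally have e1: "emeasure (distr M PK R \<Otimes>\<^sub>M distr M PG R2) SS = ennreal S * emeasure M {\<omega> \<in> space M. freq0 N (\<lambda>h. G h \<omega>) init (g - 1) = x}" .
  have pm: "(\<lambda>\<omega>. (R \<omega>, R2 \<omega>)) \<in> measurable M (PK \<Otimes>\<^sub>M PG)" using rvR rvR2 by (rule measurable_Pair)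
  have e2: "emeasure (distr M PK R \<Otimes>\<^sub>M distr M PG R2) SS = emeasure M {\<omega> \<in> space M. (\<forall>i\<in>A. type0 (\<lambda>h. G h \<omega>) init g i) \<and> freq0 N (\<lambda>h. G h \<omega>) init (g - 1) = x}"
    unfolding joint by (subst emeasure_distr[OF pm]) (use SSs key in simp_all)
  have "ennreal (\<P>(\<omega> in M. (\<forall>i\<in>A. type0 (\<lambda>h. G h \<omega>) init g i) \<and> freq0 N (\<lambda>h. G h \<omega>) init (g - 1) = x))
      = ennreal (S * \<P>(\<omega> in M. freq0 N (\<lambda>h. G h \<omega>) init (g - 1) = x))"
    using e1 e2 S0 by (simp add: M.emeasure_eq_measure ennreal_mult)
  then have "\<P>(\<omega> in M. (\<forall>i\<in>A. type0 (\<lambda>h. G h \<omega>) init g i) \<and> freq0 N (\<lambda>h. G h \<omega>) init (g - 1) = x)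
      = S * \<P>(\<omega> in M. freq0 N (\<lambda>h. G h \<omega>) init (g - 1) = x)"
    using S0 by (subst (asm) ennreal_inj) auto
  then show ?thesis
    unfolding cond_prob_def S_def[symmetric] using pos by simp
qed


end
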